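(* Let $\mathcal{X}\subset\mathbb{R}^d$ be bounded and $\mathcal{Y}\subset\mathbb{R}$. Let $p_{\mathcal{D}}$ (the data source distribution) and $p_{\mathcal{L}}$ (the training data distribution) be probability densities on $\mathcal{X}\times\mathcal{Y}$ with marginals $p_{\mathcal{X}_{\mathcal{D}}}(\mathbf{x})=\int_{\mathcal{Y}}p_{\mathcal{D}}(\mathbf{x},y)\,dy$ and $p_{\mathcal{X}_{\mathcal{L}}}(\mathbf{x})=\int_{\mathcal{Y}}p_{\mathcal{L}}(\mathbf{x},y)\,dy$, and with common conditional density $p(y\mid\mathbf{x}):=p_{\mathcal{D}}(y\mid\mathbf{x})=p_{\mathcal{L}}(y\mid\mathbf{x})$. Let $\mathcal{L}=\{(\mathbf{x}_j,y_j)\}_{j=1}^b$ be a labeled set with locations $\mathcal{L}_{\mathcal{X}}=\{\mathbf{x}_j\}_{j=1}^b$ sampled from $p_{\mathcal{L}}$, let $m_{\mathcal{L}}\in\mathcal{M}$ be a regression model trained on $\mathcal{L}$, and let $l:\mathcal{X}\times\mathcal{Y}\times\mathcal{M}\to\mathbb{R}^+$ be an error function. Write $\mathbb{E}[\,\cdot\mid\mathbf{x}]$ for expectation of $Y$ with respect to $p(y\mid\mathbf{x})$. Assume: (A1) For every $\mathbf{x}_q\in\mathcal{X}$, $\mathbb{E}[|Y|\mid\mathbf{x}_q]<\infty$, and there is $\epsilon\ge 0$ with $\mathbb{E}\big[\,|Y-\mathbb{E}[Y\mid\mathbf{x}_q]|\,\big|\,\mathbf{x}_q\big]\le\epsilon$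 for all $\mathbf{x}_q\in\mathcal{X}$; moreover there is $\lambda_p\in\mathbb{R}^+$ with $|\mathbb{E}[Y\mid\hat{\mathbf{x}}]-\mathbb{E}[Y\mid\tilde{\mathbf{x}}]|\le\lambda_p\|\hat{\mathbf{x}}-\tilde{\mathbf{x}}\|_2$ for all $\hat{\mathbf{x}},\tilde{\mathbf{x}}\in\mathcal{X}$. (A2) There is $\epsilon_{\mathcal{L}}\ge 0$ with $\mathbb{E}[l(\mathbf{x}_j,Y,m_{\mathcal{L}})\mid\mathbf{x}_j]\le\epsilon_{\mathcal{L}}$ for every $(\mathbf{x}_j,y_j)\in\mathcal{L}$; for every $y\in\mathcal{Y}$ the map $l(\cdot,y,m_{\mathcal{L}})$ is $\lambda_{l_{\mathcal{X}}}$-Lipschitz; and for every $\mathbf{x}\in\mathcal{X}$ the map $l(\mathbf{x},\cdot,m_{\mathcal{L}})$ is $\lambda_{l_{\mathcal{Y}}}$-Lipschitz and convex, with $\mathbb{E}[|l(\mathbf{x},Y,m_{\mathcal{L}})|\mid\mathbf{x}]<\infty$. Then, with $C:=\lambda_{l_{\mathcal{X}}}+\lambda_{l_{\mathcal{Y}}}\lambda_p$, $$\mathbb{E}_{p_{\mathcal{D}}}[l(\mathbf{X},Y,m_{\mathcal{L}})]\le C\,W_{\mathcal{L}_{\mathcal{X}},\mathcal{X}}(p_{\mathcal{X}_{\mathcal{L}}}\,\|\,p_{\mathcal{X}_{\mathcal{D}}})+\lambda_{l_{\mathcal{Y}}}\epsilon+\epsilon_{\mathcal{L}}+\mathbb{E}_{p_{\mathcal{L}}}[l(\mathbf{X},Y,m_{\mathcal{L}})],$$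 where $W_{\mathcal{L}_{\mathcal{X}},\mathcal{X}}$ is the weighted fill distance defined in the context.
   Context: The weighted fill distance of $\mathcal{L}_{\mathcal{X}}=\{\mathbf{x}_j\}_{j=1}^b\subset\mathcal{X}$ in $\mathcal{X}$ with respect to $p_{\mathcal{X}_{\mathcal{D}}}$ is $$W_{\mathcal{L}_{\mathcal{X}},\mathcal{X}}(p_{\mathcal{X}_{\mathcal{L}}}\,\|\,p_{\mathcal{X}_{\mathcal{D}}}):=\sup_{\mathbf{x}\in\mathcal{X}}\min_{\mathbf{x}_j\in\mathcal{L}_{\mathcal{X}}}\|\mathbf{x}-\mathbf{x}_j\|_2\,\psi_{\mathcal{L}_{\mathcal{X}}}(\mathbf{x}),$$ with weight function $\psi_{\mathcal{L}_{\mathcal{X}}}(\mathbf{x})=1-p_{\mathcal{X}_{\mathcal{L}}}(\mathbf{x})/p_{\mathcal{X}_{\mathcal{D}}}(\mathbf{x})$ if $p_{\mathcal{X}_{\mathcal{D}}}(\mathbf{x})\neq 0$ and $\psi_{\mathcal{L}_{\mathcal{X}}}(\mathbf{x})=0$ otherwise. $\mathbb{E}_{p}[l(\mathbf{X},Y,m_{\mathcal{L}})]$ denotes the expectation of $l(\mathbf{X},Y,m_{\mathcal{L}})$ with $(\mathbf{X},Y)\sim p$, for fixed trained model $m_{\mathcal{L}}$. *)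

theory Defs
  imports "HOL-Analysis.Analysis"
begin

definition prob_density_on :: "'b::euclidean_space set \<Rightarrow> ('b \<Rightarrow> real) \<Rightarrow> bool" where
  "prob_density_on S p \<longleftrightarrow> p \<in> borel_measurable lborel \<and> (\<forall>z\<in>S. 0 \<le> p z)
     \<and> set_integrable lborel S p \<and> (LINT z:S|lborel. p z) = 1"

definition marginal :: "('a::euclidean_space \<times> real \<Rightarrow> real) \<Rightarrow> real set \<Rightarrow> 'a \<Rightarrow> real" where
  "marginal p Y x = (LINT y:Y|lborel. p (x, y))"

text \<open>Conditional expectation E[f(Y) | x] w.r.t. the conditional density q(y|x) = q x y on Y.\<close>
definition cond_expect :: "('a \<Rightarrow> real \<Rightarrow> real) \<Rightarrow> real set \<Rightarrow> 'a \<Rightarrow> (real \<Rightarrow> real) \<Rightarrow> real" where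
  "cond_expect q Y x f = (LINT y:Y|lborel. q x y * f y)"

definition joint_expect :: "('a::euclidean_space \<times> real \<Rightarrow> real) \<Rightarrow> 'a set \<Rightarrow> real set
    \<Rightarrow> ('a \<Rightarrow> real \<Rightarrow> real) \<Rightarrow> real" where
  "joint_expect p X Y g = (LINT z:(X \<times> Y)|lborel. p z * g (fst z) (snd z))"

definition fill_weight :: "('a \<Rightarrow> real) \<Rightarrow> ('a \<Rightarrow> real) \<Rightarrow> 'a \<Rightarrow> real" where
  "fill_weight pXL pXD x = (if pXD x \<noteq> 0 then 1 - pXL x / pXD x else 0)"

definition weighted_fill_distance ::
  "'a::euclidean_space set \<Rightarrow> 'a set \<Rightarrow> ('a \<Rightarrow> real) \<Rightarrow> ('a \<Rightarrow> real) \<Rightarrow> real" where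
  "weighted_fill_distance LX X pXL pXD =
     (SUP x\<in>X. Min ((\<lambda>xj. norm (x - xj)) ` LX) * fill_weight pXL pXD x)"

end

theory Submission
  imports Defs
begin

lemma null_Y_interior:
  fixes Y :: "real set"
  assumes Ym: "Y \<in> sets lborel" and cY: "convex Y"
  shows "Y - interior Y \<in> null_sets lborel"
proof -
  have "negligible (frontier Y)" using cY by (rule negligible_convex_frontier)
  then have "frontier Y \<in> null_sets lebesgue" by (simp add: negligible_iff_null_sets)
  moreover have fb: "frontier Y \<in> sets lborel" by (simp add: frontier_closed borel_closed)
  ultimately have fn: "frontier Y \<in> null_sets lborel" by (simp add: null_sets_completion_iff)
  have "Y - interior Y \<subseteq> frontier Y" using closure_subset by (auto simp: frontier_def)
  moreover have "Y - interior Y \<in> sets lborel" using Ym by auto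
  ultimately show ?thesis using fn null_sets_subset by blast
qed

lemma mean_interior:
  fixes Y :: "real set" and f :: "real \<Rightarrow> real"
  assumes pd: "prob_density_on Y f" and Ym: "Y \<in> sets lborel" and cY: "convex Y"
    and int1: "set_integrable lborel Y (\<lambda>y. f y * y)"
  shows "(LINT y:Y|lborel. f y * y) \<in> interior Y"
proof (rule ccontr)
  define m where "m = (LINT y:Y|lborel. f y * y)"
  assume nin: "m \<notin> interior Y"
  have fint: "set_integrable lborel Y f" and f1: "(LINT y:Y|lborel. f y) = 1"
    and fnn: "\<forall>y\<in>Y. 0 \<le> f y" and fm: "f \<in> borel_measurable lborel"
    using pd unfolding prob_density_on_def by auto
  have AEi: "AE y in lborel. y \<in> Y \<longrightarrow> y \<in> interior Y"
    using AE_not_in[OF null_Y_interior[OF Ym cY]] by auto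
  have ci: "convex (interior Y)" using cY by (rule convex_interior)
  have side: "(\<forall>z\<in>interior Y. z < m) \<or> (\<forall>z\<in>interior Y. m < z)"
  proof (rule ccontr)
    assume "\<not> ?thesis"
    then obtain z1 z2 where z: "z1 \<in> interior Y" "z2 \<in> interior Y" "m \<le> z1" "z2 \<le> m" by force
    then have "m \<in> interior Y" using ci unfolding is_interval_convex_1[symmetric] is_interval_1 by blast
    with nin show False by simp
  qed
  have key: "AE y in lborel. indicator Y y * f y = 0"
    if sg: "\<forall>z\<in>interior Y. 0 < s * (m - z)" for s :: real
  proof -
    define h where "h y = s * (m * (indicator Y y * f y) - indicator Y y * (f y * y))" for y
    have hint: "integrable lborel h"
      unfolding h_def using fint int1
      by (auto simp: set_integrable_def)
    have "integral\<^sup>L lborel h = s * (m * (LINT y:Y|lborel. f y) - (LINT y:Y|lborel. f y * y))"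
      unfolding h_def using fint int1
      by (simp add: set_integrable_def set_lebesgue_integral_def)
    also have "\<dots> = 0" using f1 m_def by simp
    finally have h0: "integral\<^sup>L lborel h = 0" .
    have hnn: "AE y in lborel. 0 \<le> h y"
      using AEi
    proof eventually_elim
      case (elim y)
      show ?case
      proof (cases "y \<in> Y")
        case True
        then have "0 < s * (m - y)" using elim sg by auto
        moreover have "h y = f y * (s * (m - y))" using True by (simp add: h_def algebra_simps)
        ultimately show ?thesis using True fnn by simp
      qed (simp add: h_def)
    qed
    have "AE y in lborel. h y = 0" using integral_nonneg_eq_0_iff_AE[OF hint hnn] h0 by simp
    then show ?thesis using AEi
    proof eventually_elim
      case (elim y)
      show ?case
      proof (cases "y \<in> Y")
        case True
        then have "0 < s * (m - y)" using elim sg by auto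
        moreover have "h y = f y * (s * (m - y))" using True by (simp add: h_def algebra_simps)
        ultimately show ?thesis using True elim by auto
      qed simp
    qed
  qed
  have ae: "AE y in lborel. indicator Y y * f y = 0"
    using side
  proof
    assume "\<forall>z\<in>interior Y. z < m" then show ?thesis by (intro key[of 1]) auto
  next
    assume "\<forall>z\<in>interior Y. m < z" then show ?thesis by (intro key[of "-1"]) auto
  qed
  have "(LINT y:Y|lborel. f y) = 0"
    unfolding set_lebesgue_integral_def by (rule integral_eq_zero_AE) (use ae in simp)
  with f1 show False by simp
qed

lemma pd_basic:
  assumes "prob_density_on Y f"
  shows "set_integrable lborel Y f" "(LINT y:Y|lborel. f y) = 1" "\<forall>y\<in>Y. 0 \<le> f y"
    "f \<in> borel_measurable lborel"
  using assms unfolding prob_density_on_def by auto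

lemma dev_integrable:
  fixes Y :: "real set" and f :: "real \<Rightarrow> real"
  assumes pd: "prob_density_on Y f"
    and int1: "set_integrable lborel Y (\<lambda>y. f y * y)"
  shows "set_integrable lborel Y (\<lambda>y. f y * \<bar>y - m\<bar>)"
proof -
  note b = pd_basic[OF pd]
  have "integrable lborel (\<lambda>y. indicator Y y * (f y * y) - m * (indicator Y y * f y))"
    using int1 b(1) unfolding set_integrable_def by (intro Bochner_Integration.integrable_diff integrable_mult_right) auto
  then have "integrable lborel (\<lambda>y. \<bar>indicator Y y * (f y * y) - m * (indicator Y y * f y)\<bar>)"
    by (rule integrable_abs)
  moreover have "\<bar>indicator Y y * (f y * y) - m * (indicator Y y * f y)\<bar> = indicator Y y * (f y * \<bar>y - m\<bar>)" for y
  proof (cases "y \<in> Y")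
    case True
    then have "0 \<le> f y" using b(3) by auto
    then have "\<bar>f y * y - m * f y\<bar> = f y * \<bar>y - m\<bar>"
      by (simp add: abs_mult right_diff_distrib' mult.commute flip: abs_of_nonneg)
      (metis abs_mult abs_of_nonneg mult.commute right_diff_distrib')
    then show ?thesis using True by simp
  qed simp
  ultimately show ?thesis unfolding set_integrable_def by simp
qed

lemma jensen_dens:
  fixes Y :: "real set" and f \<phi> :: "real \<Rightarrow> real"
  assumes pd: "prob_density_on Y f" and Ym: "Y \<in> sets lborel" and cv: "convex_on Y \<phi>"
    and int1: "set_integrable lborel Y (\<lambda>y. f y * y)"
    and int2: "set_integrable lborel Y (\<lambda>y. f y * \<phi> y)"
  shows "\<phi> (LINT y:Y|lborel. f y * y) \<le> (LINT y:Y|lborel. f y * \<phi> y)"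
proof -
  note b = pd_basic[OF pd]
  define m where "m = (LINT y:Y|lborel. f y * y)"
  have cY: "convex Y" using cv by (simp add: convex_on_def)
  have mI: "m \<in> interior Y" unfolding m_def by (rule mean_interior[OF pd Ym cY int1])
  define c where "c = Inf ((\<lambda>t. (\<phi> m - \<phi> t) / (m - t)) ` ({m<..} \<inter> Y))"
  have sub: "\<phi> m + c * (y - m) \<le> \<phi> y" if "y \<in> Y" for y
    using convex_le_Inf_differential[OF cv mI that] unfolding c_def by simp
  have ia: "integrable lborel (\<lambda>y. \<phi> m * (indicator Y y * f y) + c * (indicator Y y * (f y * y) - m * (indicator Y y * f y)))"
    using int1 b(1) unfolding set_integrable_def
    by (intro Bochner_Integration.integrable_add Bochner_Integration.integrable_diff integrable_mult_right) auto
  have "integral\<^sup>L lborel (\<lambda>y. \<phi> m * (indicator Y y * f y) + c * (indicator Y y * (f y * y) - m * (indicator Y y * f y)))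
      = \<phi> m * (LINT y:Y|lborel. f y) + c * ((LINT y:Y|lborel. f y * y) - m * (LINT y:Y|lborel. f y))"
    using int1 b(1) unfolding set_integrable_def set_lebesgue_integral_def by simp
  also have "\<dots> = \<phi> m" using b(2) m_def by simp
  finally have eq: "integral\<^sup>L lborel (\<lambda>y. \<phi> m * (indicator Y y * f y) + c * (indicator Y y * (f y * y) - m * (indicator Y y * f y))) = \<phi> m" .
  have "integral\<^sup>L lborel (\<lambda>y. \<phi> m * (indicator Y y * f y) + c * (indicator Y y * (f y * y) - m * (indicator Y y * f y)))
      \<le> integral\<^sup>L lborel (\<lambda>y. indicator Y y * (f y * \<phi> y))"
  proof (rule integral_mono[OF ia])
    show "integrable lborel (\<lambda>y. indicator Y y * (f y * \<phi> y))" using int2 by (simp add: set_integrable_def)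
    fix y
    show "\<phi> m * (indicator Y y * f y) + c * (indicator Y y * (f y * y) - m * (indicator Y y * f y)) \<le> indicator Y y * (f y * \<phi> y)"
    proof (cases "y \<in> Y")
      case True
      have "f y * (\<phi> m + c * (y - m)) \<le> f y * \<phi> y" using sub[OF True] b(3) True by (intro mult_left_mono) auto
      then show ?thesis using True by (simp add: algebra_simps)
    qed simp
  qed
  then show ?thesis using eq unfolding set_lebesgue_integral_def m_def by simp
qed

lemma lip_dens:
  fixes Y :: "real set" and f \<phi> :: "real \<Rightarrow> real"
  assumes pd: "prob_density_on Y f" and mY: "m \<in> Y" and lip: "L-lipschitz_on Y \<phi>"
    and int2: "set_integrable lborel Y (\<lambda>y. f y * \<phi> y)"
    and int3: "set_integrable lborel Y (\<lambda>y. f y * \<bar>y - m\<bar>)"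
  shows "(LINT y:Y|lborel. f y * \<phi> y) \<le> \<phi> m + L * (LINT y:Y|lborel. f y * \<bar>y - m\<bar>)"
proof -
  note b = pd_basic[OF pd]
  have pt: "\<phi> y \<le> \<phi> m + L * \<bar>y - m\<bar>" if "y \<in> Y" for y
    using lipschitz_onD[OF lip that mY] by (auto simp: dist_real_def)
  have ia: "integrable lborel (\<lambda>y. \<phi> m * (indicator Y y * f y) + L * (indicator Y y * (f y * \<bar>y - m\<bar>)))"
    using int3 b(1) unfolding set_integrable_def
    by (intro Bochner_Integration.integrable_add integrable_mult_right) auto
  have eq: "integral\<^sup>L lborel (\<lambda>y. \<phi> m * (indicator Y y * f y) + L * (indicator Y y * (f y * \<bar>y - m\<bar>)))
      = \<phi> m + L * (LINT y:Y|lborel. f y * \<bar>y - m\<bar>)"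
    using int3 b(1) b(2) unfolding set_integrable_def set_lebesgue_integral_def by simp
  have "integral\<^sup>L lborel (\<lambda>y. indicator Y y * (f y * \<phi> y))
     \<le> integral\<^sup>L lborel (\<lambda>y. \<phi> m * (indicator Y y * f y) + L * (indicator Y y * (f y * \<bar>y - m\<bar>)))"
  proof (rule integral_mono[OF _ ia])
    show "integrable lborel (\<lambda>y. indicator Y y * (f y * \<phi> y))" using int2 by (simp add: set_integrable_def)
    fix y
    show "indicator Y y * (f y * \<phi> y) \<le> \<phi> m * (indicator Y y * f y) + L * (indicator Y y * (f y * \<bar>y - m\<bar>))"
    proof (cases "y \<in> Y")
      case True
      have "f y * \<phi> y \<le> f y * (\<phi> m + L * \<bar>y - m\<bar>)" using pt[OF True] b(3) True by (intro mult_left_mono) auto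
      then show ?thesis using True by (simp add: algebra_simps)
    qed simp
  qed
  then show ?thesis using eq unfolding set_lebesgue_integral_def by simp
qed

lemma marg_facts:
  fixes X :: "'a::euclidean_space set" and Y :: "real set" and p :: "'a \<times> real \<Rightarrow> real"
  assumes Xm: "X \<in> sets lborel" and Ym: "Y \<in> sets lborel" and pd: "prob_density_on (X \<times> Y) p"
  shows "set_integrable lborel X (marginal p Y)" "(LINT x:X|lborel. marginal p Y x) = 1"
    "\<forall>x\<in>X. 0 \<le> marginal p Y x"
proof -
  note b = pd_basic[OF pd]
  define G where "G z = indicator (X \<times> Y) z * p z" for z
  have Gi: "integrable (lborel \<Otimes>\<^sub>M lborel) G"
    using b(1) unfolding set_integrable_def G_def lborel_prod by simp
  have inner: "(\<integral>y. G (x,y) \<partial>lborel) = indicator X x * marginal p Y x" for x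
    unfolding G_def marginal_def set_lebesgue_integral_def
    by (simp add: indicator_times mult.assoc)
  show "set_integrable lborel X (marginal p Y)"
    using lborel_pair.integrable_fst'[OF Gi] unfolding inner set_integrable_def by simp
  have "(\<integral>x. (\<integral>y. G (x,y) \<partial>lborel) \<partial>lborel) = integral\<^sup>L (lborel \<Otimes>\<^sub>M lborel) G"
    by (rule lborel_pair.integral_fst'[OF Gi])
  also have "\<dots> = 1" using b(2) unfolding G_def lborel_prod set_lebesgue_integral_def by simp
  finally show "(LINT x:X|lborel. marginal p Y x) = 1"
    unfolding inner set_lebesgue_integral_def by simp
  show "\<forall>x\<in>X. 0 \<le> marginal p Y x"
  proof
    fix x assume "x \<in> X"
    then show "0 \<le> marginal p Y x" unfolding marginal_def set_lebesgue_integral_def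
      using b(3) by (intro Bochner_Integration.integral_nonneg) (auto simp: indicator_def)
  qed
qed

lemma fub:
  fixes X :: "'a::euclidean_space set" and Y :: "real set" and p :: "'a \<times> real \<Rightarrow> real"
    and q h :: "'a \<Rightarrow> real \<Rightarrow> real"
  assumes Xm: "X \<in> sets lborel" and Ym: "Y \<in> sets lborel" and pd: "prob_density_on (X \<times> Y) p"
    and cond: "\<forall>x\<in>X. \<forall>y\<in>Y. p (x, y) = marginal p Y x * q x y"
    and qm: "(\<lambda>z. q (fst z) (snd z)) \<in> borel_measurable lborel"
    and hm: "(\<lambda>z. h (fst z) (snd z)) \<in> borel_measurable lborel"
    and hnn: "\<forall>x\<in>X. \<forall>y\<in>Y. 0 \<le> h x y"
    and hint: "\<forall>x\<in>X. set_integrable lborel Y (\<lambda>y. q x y * h x y)"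
    and hb: "\<forall>x\<in>X. cond_expect q Y x (h x) \<le> B"
    and gnn: "\<forall>x\<in>X. 0 \<le> cond_expect q Y x (h x)"
  shows "set_integrable lborel X (\<lambda>x. marginal p Y x * cond_expect q Y x (h x))"
    "joint_expect p X Y h = (LINT x:X|lborel. marginal p Y x * cond_expect q Y x (h x))"
proof -
  note b = pd_basic[OF pd]
  note mf = marg_facts[OF Xm Ym pd]
  define F where "F z = indicator (X \<times> Y) z * (p z * h (fst z) (snd z))" for z
  have XYm: "X \<times> Y \<in> sets (lborel \<Otimes>\<^sub>M lborel)" using Xm Ym by (rule pair_measureI)
  have pm: "p \<in> borel_measurable (lborel \<Otimes>\<^sub>M lborel)" using b(4) by (simp add: lborel_prod)
  have hm': "(\<lambda>z. h (fst z) (snd z)) \<in> borel_measurable (lborel \<Otimes>\<^sub>M lborel)" using hm by (simp add: lborel_prod)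
  have Fm: "F \<in> borel_measurable (lborel \<Otimes>\<^sub>M lborel)"
    unfolding F_def using XYm pm hm' by measurable
  have Fnn: "0 \<le> F z" for z
    using b(3) hnn unfolding F_def by (cases z) (auto simp: indicator_def)
  have Fx: "(\<lambda>y. F (x, y)) = (\<lambda>y. indicator X x * (marginal p Y x * (indicator Y y * (q x y * h x y))))" for x
  proof
    fix y show "F (x, y) = indicator X x * (marginal p Y x * (indicator Y y * (q x y * h x y)))"
      using cond unfolding F_def by (cases "x \<in> X"; cases "y \<in> Y") (auto simp: indicator_def)
  qed
  have inner: "(\<integral>y. F (x,y) \<partial>lborel) = indicator X x * (marginal p Y x * cond_expect q Y x (h x))" for x
    unfolding Fx cond_expect_def set_lebesgue_integral_def by simp
  have AEi: "AE x in lborel. integrable lborel (\<lambda>y. F (x, y))"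
  proof (rule AE_I2)
    fix x show "integrable lborel (\<lambda>y. F (x, y))"
    proof (cases "x \<in> X")
      case True
      then show ?thesis using hint unfolding Fx set_integrable_def by simp
    qed (simp add: Fx)
  qed
  have innm: "(\<lambda>x. \<integral>y. F (x,y) \<partial>lborel) \<in> borel_measurable lborel"
    using Fm by measurable
  have gi: "integrable lborel (\<lambda>x. indicator X x * (marginal p Y x * cond_expect q Y x (h x)))"
  proof (rule Bochner_Integration.integrable_bound)
    show "integrable lborel (\<lambda>x. \<bar>B\<bar> * (indicator X x * marginal p Y x))"
      using mf(1) unfolding set_integrable_def by simp
    show "(\<lambda>x. indicator X x * (marginal p Y x * cond_expect q Y x (h x))) \<in> borel_measurable lborel"
      using innm unfolding inner .
    show "AE x in lborel. norm (indicator X x * (marginal p Y x * cond_expect q Y x (h x)))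
        \<le> norm (\<bar>B\<bar> * (indicator X x * marginal p Y x))"
    proof (rule AE_I2)
      fix x show "norm (indicator X x * (marginal p Y x * cond_expect q Y x (h x)))
        \<le> norm (\<bar>B\<bar> * (indicator X x * marginal p Y x))"
      proof (cases "x \<in> X")
        case True
        then have "0 \<le> marginal p Y x" "0 \<le> cond_expect q Y x (h x)" "cond_expect q Y x (h x) \<le> B"
          using mf(3) gnn hb by auto
        then show ?thesis using True by (simp add: abs_mult) (metis mult.commute mult_left_mono)
      qed simp
    qed
  qed
  then show si: "set_integrable lborel X (\<lambda>x. marginal p Y x * cond_expect q Y x (h x))"
    unfolding set_integrable_def by simp
  have Fi: "integrable (lborel \<Otimes>\<^sub>M lborel) F"
  proof (rule lborel_pair.Fubini_integrable[OF Fm _ AEi])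
    have "(\<lambda>x. \<integral>y. norm (F (x, y)) \<partial>lborel) = (\<lambda>x. indicator X x * (marginal p Y x * cond_expect q Y x (h x)))"
      using Fnn inner by simp
    then show "integrable lborel (\<lambda>x. \<integral>y. norm (F (x, y)) \<partial>lborel)" using gi by simp
  qed
  have "joint_expect p X Y h = integral\<^sup>L (lborel \<Otimes>\<^sub>M lborel) F"
    unfolding joint_expect_def set_lebesgue_integral_def F_def lborel_prod by simp
  also have "\<dots> = (\<integral>x. (\<integral>y. F (x,y) \<partial>lborel) \<partial>lborel)"
    by (rule lborel_pair.integral_fst'[OF Fi, symmetric])
  also have "\<dots> = (LINT x:X|lborel. marginal p Y x * cond_expect q Y x (h x))"
    unfolding inner set_lebesgue_integral_def by simp
  finally show "joint_expect p X Y h = (LINT x:X|lborel. marginal p Y x * cond_expect q Y x (h x))" .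
qed

lemma pw:
  fixes a b g C d K W \<psi> :: real
  assumes a0: "0 \<le> a" and b0: "0 \<le> b" and g0: "0 \<le> g" and gb: "g \<le> C*d + K" and C0: "0 \<le> C"
    and K0: "0 \<le> K" and d0: "0 \<le> d" and dW: "d*\<psi> \<le> W" and W0: "0 \<le> W"
    and ps: "\<psi> = (if a \<noteq> 0 then 1 - b/a else 0)"
  shows "a*g - b*g \<le> a*(C*W + K)"
proof (cases "a = 0")
  case True
  have "0 \<le> b*g" using b0 g0 by simp
  then show ?thesis using True by simp
next
  case False
  then have a: "0 < a" using a0 by simp
  have ps': "\<psi> = 1 - b/a" using ps False by simp
  have "a*\<psi> = a - b" unfolding ps' using False by (simp add: right_diff_distrib)
  then have e: "a*g - b*g = a*(\<psi>*g)" by (metis left_diff_distrib mult.assoc)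
  have p1: "\<psi> \<le> 1" unfolding ps' using a b0 by simp
  have R0: "0 \<le> C*W + K" using C0 W0 K0 by simp
  show ?thesis
  proof (cases "\<psi> \<le> 0")
    case True
    then have "\<psi>*g \<le> 0" using g0 by (simp add: mult_nonpos_nonneg)
    then have "\<psi>*g \<le> C*W + K" using R0 by linarith
    then show ?thesis unfolding e using a by (intro mult_left_mono) auto
  next
    case False
    then have "\<psi>*g \<le> \<psi>*(C*d + K)" using gb by (intro mult_left_mono) auto
    also have "\<dots> = C*(d*\<psi>) + \<psi>*K" by (simp add: algebra_simps)
    also have "\<dots> \<le> C*W + 1*K" using C0 dW K0 p1 by (intro add_mono mult_left_mono mult_right_mono) auto
    finally have "\<psi>*g \<le> C*W + K" by simp
    then show ?thesis unfolding e using a by (intro mult_left_mono) auto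
  qed
qed

theorem theorem1:
  fixes X :: "'a::euclidean_space set" and Y :: "real set"
    and pD pL :: "'a \<times> real \<Rightarrow> real"
    and q :: "'a \<Rightarrow> real \<Rightarrow> real"
    and L :: "('a \<times> real) set"
    and l :: "'a \<Rightarrow> real \<Rightarrow> 'm \<Rightarrow> real" and mL :: 'm
    and eps lam_p eps_L lam_lX lam_lY :: real
  assumes X_bounded: "bounded X"
    and X_meas: "X \<in> sets lborel" and Y_meas: "Y \<in> sets lborel"
    and pD_dens: "prob_density_on (X \<times> Y) pD"
    and pL_dens: "prob_density_on (X \<times> Y) pL"
    and q_meas: "(\<lambda>z. q (fst z) (snd z)) \<in> borel_measurable lborel"
    and q_dens: "\<forall>x\<in>X. prob_density_on Y (q x)"
    and pD_cond: "\<forall>x\<in>X. \<forall>y\<in>Y. pD (x, y) = marginal pD Y x * q x y"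
    and pL_cond: "\<forall>x\<in>X. \<forall>y\<in>Y. pL (x, y) = marginal pL Y x * q x y"
    and L_fin: "finite L" and L_ne: "L \<noteq> {}" and L_sub: "L \<subseteq> X \<times> Y"
    and l_nonneg: "\<forall>x\<in>X. \<forall>y\<in>Y. 0 \<le> l x y mL"
    and l_meas: "(\<lambda>z. l (fst z) (snd z) mL) \<in> borel_measurable lborel"
    \<comment> \<open>(A1)\<close>
    and A1_int: "\<forall>x\<in>X. set_integrable lborel Y (\<lambda>y. q x y * \<bar>y\<bar>)"
    and eps_nonneg: "0 \<le> eps"
    and A1_eps: "\<forall>x\<in>X. cond_expect q Y x (\<lambda>y. \<bar>y - cond_expect q Y x (\<lambda>y. y)\<bar>) \<le> eps"
    and lp_nonneg: "0 \<le> lam_p"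
    and A1_lip: "\<forall>x1\<in>X. \<forall>x2\<in>X.
        \<bar>cond_expect q Y x1 (\<lambda>y. y) - cond_expect q Y x2 (\<lambda>y. y)\<bar> \<le> lam_p * norm (x1 - x2)"
    \<comment> \<open>(A2)\<close>
    and epsL_nonneg: "0 \<le> eps_L"
    and A2_L: "\<forall>(xj, yj)\<in>L. cond_expect q Y xj (\<lambda>y. l xj y mL) \<le> eps_L"
    and A2_lipX: "\<forall>y\<in>Y. lam_lX-lipschitz_on X (\<lambda>x. l x y mL)"
    and A2_lipY: "\<forall>x\<in>X. lam_lY-lipschitz_on Y (\<lambda>y. l x y mL)"
    and A2_conv: "\<forall>x\<in>X. convex_on Y (\<lambda>y. l x y mL)"
    and A2_int: "\<forall>x\<in>X. set_integrable lborel Y (\<lambda>y. q x y * \<bar>l x y mL\<bar>)"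
  shows "joint_expect pD X Y (\<lambda>x y. l x y mL)
     \<le> (lam_lX + lam_lY * lam_p) * weighted_fill_distance (fst ` L) X (marginal pL Y) (marginal pD Y)
       + lam_lY * eps + eps_L + joint_expect pL X Y (\<lambda>x y. l x y mL)"

proof -
  define mD where "mD = marginal pD Y"
  define mL' where "mL' = marginal pL Y"
  define g where "g x = cond_expect q Y x (\<lambda>y. l x y mL)" for x
  define \<mu> where "\<mu> x = cond_expect q Y x (\<lambda>y. y)" for x
  define LX where "LX = fst ` L"
  define d where "d x = Min ((\<lambda>xj. norm (x - xj)) ` LX)" for x
  define \<psi> where "\<psi> x = fill_weight mL' mD x" for x
  define C where "C = lam_lX + lam_lY * lam_p"
  define K where "K = lam_lY * eps + eps_L"
  obtain x0 y0 where x0y0: "(x0, y0) \<in> L" using L_ne by auto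
  have x0X: "x0 \<in> X" and y0Y: "y0 \<in> Y" using x0y0 L_sub by auto
  have LXfin: "finite LX" and LXne: "LX \<noteq> {}" and LXsub: "LX \<subseteq> X"
    using L_fin L_ne L_sub unfolding LX_def by auto
  have lX0: "0 \<le> lam_lX" using A2_lipX y0Y by (auto simp: lipschitz_on_def)
  have lY0: "0 \<le> lam_lY" using A2_lipY x0X by (auto simp: lipschitz_on_def)
  have C0: "0 \<le> C" unfolding C_def using lX0 lY0 lp_nonneg by simp
  have K0: "0 \<le> K" unfolding K_def using lY0 eps_nonneg epsL_nonneg by simp
  have Yb: "Y \<in> sets borel" using Y_meas by simp
  have cY: "convex Y" using A2_conv x0X by (auto simp: convex_on_def)
  have lm: "(\<lambda>y. l x y mL) \<in> borel_measurable lborel" for x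
  proof -
    have "(\<lambda>y. (x, y)) \<in> measurable lborel (lborel \<Otimes>\<^sub>M lborel)" by measurable
    then have P: "(\<lambda>y. (x, y)) \<in> measurable lborel lborel" by (simp add: lborel_prod)
    have "(\<lambda>y. (\<lambda>z. l (fst z) (snd z) mL) (x, y)) \<in> borel_measurable lborel"
      by (rule measurable_compose[OF P l_meas])
    then show ?thesis by simp
  qed
  have qb: "\<And>x. x \<in> X \<Longrightarrow> set_integrable lborel Y (q x) \<and> (LINT y:Y|lborel. q x y) = 1 \<and> (\<forall>y\<in>Y. 0 \<le> q x y) \<and> q x \<in> borel_measurable lborel"
    using q_dens pd_basic by blast
  have qi1: "set_integrable lborel Y (\<lambda>y. q x y * y)" if "x \<in> X" for x
  proof -
    have qm: "q x \<in> borel_measurable borel" using qb[OF that] by simp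
    have m: "set_borel_measurable lborel Y (\<lambda>y. q x y * y)"
      unfolding set_borel_measurable_def measurable_lborel2 using qm Yb by measurable
    have "set_integrable lborel Y (\<lambda>y. \<bar>q x y * y\<bar>)"
      using A1_int that qb[OF that] by (subst set_integrable_cong[OF refl refl, where f'="\<lambda>y. q x y * \<bar>y\<bar>"]) (auto simp: abs_mult)
    then show ?thesis using set_integrable_abs_iff[OF m] by simp
  qed
  have li0: "set_integrable lborel Y (\<lambda>y. q x y * l x y mL)" if "x \<in> X" for x
    using A2_int that l_nonneg by (subst set_integrable_cong[OF refl refl, where f'="\<lambda>y. q x y * \<bar>l x y mL\<bar>"]) auto
  have li: "set_integrable lborel Y (\<lambda>y. q x y * l z y mL)" if "x \<in> X" "z \<in> X" for x z
  proof (rule set_integrable_bound[where f="\<lambda>y. q x y * l x y mL + lam_lX * norm (x - z) * q x y"])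
    show "set_integrable lborel Y (\<lambda>y. q x y * l x y mL + lam_lX * norm (x - z) * q x y)"
      using li0[OF that(1)] qb[OF that(1)] by auto
    show "set_borel_measurable lborel Y (\<lambda>y. q x y * l z y mL)"
    proof -
      have qm: "q x \<in> borel_measurable borel" using qb[OF that(1)] by simp
      have lm': "(\<lambda>y. l z y mL) \<in> borel_measurable borel" using lm[of z] by simp
      show ?thesis unfolding set_borel_measurable_def measurable_lborel2 using qm lm' Yb by measurable
    qed
    show "AE y in lborel. y \<in> Y \<longrightarrow> norm (q x y * l z y mL) \<le> norm (q x y * l x y mL + lam_lX * norm (x - z) * q x y)"
    proof (rule AE_I2, rule impI)
      fix y assume y: "y \<in> Y"
      have "l z y mL \<le> l x y mL + lam_lX * norm (x - z)"
        using lipschitz_onD[OF A2_lipX[rule_format, OF y] that(2) that(1)] by (auto simp: dist_norm norm_minus_commute)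
      then have "q x y * l z y mL \<le> q x y * (l x y mL + lam_lX * norm (x - z))"
        using qb[OF that(1)] y by (intro mult_left_mono) auto
      moreover have "0 \<le> q x y * l z y mL" using qb[OF that(1)] y l_nonneg that by auto
      ultimately show "norm (q x y * l z y mL) \<le> norm (q x y * l x y mL + lam_lX * norm (x - z) * q x y)"
        by (simp add: algebra_simps)
    qed
  qed
  have \<mu>Y: "\<mu> x \<in> Y" if "x \<in> X" for x
    using mean_interior[OF q_dens[rule_format, OF that] Y_meas cY qi1[OF that]] interior_subset
    unfolding \<mu>_def cond_expect_def by blast
  have g0: "0 \<le> g x" if "x \<in> X" for x
    unfolding g_def cond_expect_def set_lebesgue_integral_def
    using qb[OF that] l_nonneg that by (intro Bochner_Integration.integral_nonneg) (auto simp: indicator_def)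
  have gb: "g x \<le> C * d x + K" if xX: "x \<in> X" for x
  proof -
    have "d x \<in> (\<lambda>xj. norm (x - xj)) ` LX" unfolding d_def using LXfin LXne by (intro Min_in) auto
    then obtain xj where xj: "xj \<in> LX" and dx: "d x = norm (x - xj)" by auto
    then obtain yj where xyj: "(xj, yj) \<in> L" unfolding LX_def by force
    have xjX: "xj \<in> X" using xj LXsub by auto
    have "g x \<le> cond_expect q Y x (\<lambda>y. l xj y mL) + lam_lX * norm (x - xj)"
    proof -
      have "g x \<le> (LINT y:Y|lborel. q x y * l xj y mL + lam_lX * norm (x - xj) * q x y)"
        unfolding g_def cond_expect_def
      proof (rule set_integral_mono)
        show "set_integrable lborel Y (\<lambda>y. q x y * l x y mL)" by (rule li0[OF xX])
        show "set_integrable lborel Y (\<lambda>y. q x y * l xj y mL + lam_lX * norm (x - xj) * q x y)"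
          using li[OF xX xjX] qb[OF xX] by auto
        fix y assume y: "y \<in> Y"
        have "l x y mL \<le> l xj y mL + lam_lX * norm (x - xj)"
          using lipschitz_onD[OF A2_lipX[rule_format, OF y] xX xjX] by (auto simp: dist_norm norm_minus_commute)
        then have "q x y * l x y mL \<le> q x y * (l xj y mL + lam_lX * norm (x - xj))"
          using qb[OF xX] y by (intro mult_left_mono) auto
        then show "q x y * l x y mL \<le> q x y * l xj y mL + lam_lX * norm (x - xj) * q x y"
          by (simp add: algebra_simps)
      qed
      also have "\<dots> = cond_expect q Y x (\<lambda>y. l xj y mL) + lam_lX * norm (x - xj)"
        unfolding cond_expect_def using li[OF xX xjX] qb[OF xX] by simp
      finally show ?thesis .
    qed
    also have "cond_expect q Y x (\<lambda>y. l xj y mL) \<le> l xj (\<mu> x) mL + lam_lY * eps"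
    proof -
      have "cond_expect q Y x (\<lambda>y. l xj y mL) \<le> l xj (\<mu> x) mL + lam_lY * (LINT y:Y|lborel. q x y * \<bar>y - \<mu> x\<bar>)"
        unfolding cond_expect_def
        by (rule lip_dens[OF q_dens[rule_format, OF xX] \<mu>Y[OF xX] A2_lipY[rule_format, OF xjX] li[OF xX xjX]
              dev_integrable[OF q_dens[rule_format, OF xX] qi1[OF xX]]])
      moreover have "(LINT y:Y|lborel. q x y * \<bar>y - \<mu> x\<bar>) \<le> eps"
        using A1_eps xX unfolding \<mu>_def cond_expect_def by auto
      ultimately show ?thesis using lY0 by (meson add_left_mono mult_left_mono order_trans)
    qed
    also have "l xj (\<mu> x) mL \<le> l xj (\<mu> xj) mL + lam_lY * (lam_p * norm (x - xj))"
    proof -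
      have "l xj (\<mu> x) mL \<le> l xj (\<mu> xj) mL + lam_lY * \<bar>\<mu> x - \<mu> xj\<bar>"
        using lipschitz_onD[OF A2_lipY[rule_format, OF xjX] \<mu>Y[OF xX] \<mu>Y[OF xjX]] by (auto simp: dist_real_def)
      moreover have "\<bar>\<mu> x - \<mu> xj\<bar> \<le> lam_p * norm (x - xj)" using A1_lip xX xjX unfolding \<mu>_def by auto
      ultimately show ?thesis using lY0 by (meson add_left_mono mult_left_mono order_trans)
    qed
    also have "l xj (\<mu> xj) mL \<le> g xj"
      unfolding g_def \<mu>_def cond_expect_def
      by (rule jensen_dens[OF q_dens[rule_format, OF xjX] Y_meas A2_conv[rule_format, OF xjX] qi1[OF xjX] li0[OF xjX]])
    also have "g xj \<le> eps_L" using A2_L xyj unfolding g_def by auto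
    finally show ?thesis unfolding C_def K_def dx by (simp add: algebra_simps)
  qed

  obtain M where M: "\<forall>x\<in>X. norm x \<le> M" using X_bounded bounded_iff by blast
  have x0LX: "x0 \<in> LX" using x0y0 unfolding LX_def by force
  have d0: "0 \<le> d x" for x
  proof -
    have "d x \<in> (\<lambda>xj. norm (x - xj)) ` LX" unfolding d_def using LXfin LXne by (intro Min_in) auto
    then show ?thesis by auto
  qed
  have dle: "d x \<le> 2*M" if "x \<in> X" for x
  proof -
    have "d x \<le> norm (x - x0)" unfolding d_def using LXfin x0LX by (intro Min_le) auto
    also have "\<dots> \<le> norm x + norm x0" by (rule norm_triangle_ineq4)
    also have "\<dots> \<le> 2*M"
    proof -
      have "norm x \<le> M" "norm x0 \<le> M" using M that x0X by auto
      then show ?thesis by linarith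
    qed
    finally show ?thesis .
  qed
  note mfD = marg_facts[OF X_meas Y_meas pD_dens] and mfL = marg_facts[OF X_meas Y_meas pL_dens]
  have \<psi>1: "\<psi> x \<le> 1" if "x \<in> X" for x
    using mfD(3) mfL(3) that unfolding \<psi>_def fill_weight_def mD_def mL'_def by auto
  have dpsi: "d x * \<psi> x \<le> d x" if "x \<in> X" for x
    using mult_left_mono[OF \<psi>1[OF that] d0[of x]] by simp
  have bdd: "bdd_above ((\<lambda>x. d x * \<psi> x) ` X)"
    by (rule bdd_aboveI2[where M="2*M"]) (meson dpsi dle order_trans)
  define W where "W = weighted_fill_distance LX X mL' mD"
  have Weq: "W = (SUP x\<in>X. d x * \<psi> x)" unfolding W_def weighted_fill_distance_def d_def \<psi>_def ..
  have Wup: "d x * \<psi> x \<le> W" if "x \<in> X" for x unfolding Weq by (rule cSUP_upper[OF that bdd])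
  have "d x0 \<le> norm (x0 - x0)" unfolding d_def using LXfin x0LX by (intro Min_le) auto
  then have "d x0 = 0" using d0[of x0] by simp
  then have W0: "0 \<le> W" using Wup[OF x0X] by simp
  have gbB: "\<forall>x\<in>X. cond_expect q Y x (\<lambda>y. l x y mL) \<le> C*(2*M) + K"
  proof
    fix x assume x: "x \<in> X"
    have "C * d x \<le> C*(2*M)" using dle[OF x] C0 by (rule mult_left_mono)
    then show "cond_expect q Y x (\<lambda>y. l x y mL) \<le> C*(2*M) + K" using gb[OF x] unfolding g_def by simp
  qed
  have g0': "\<forall>x\<in>X. 0 \<le> cond_expect q Y x (\<lambda>y. l x y mL)" using g0 unfolding g_def by blast
  have li0': "\<forall>x\<in>X. set_integrable lborel Y (\<lambda>y. q x y * l x y mL)" using li0 by blast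
  note FD = fub[where h="\<lambda>x y. l x y mL" and B="C*(2*M)+K", OF X_meas Y_meas pD_dens pD_cond q_meas l_meas l_nonneg li0' gbB g0']
  note FL = fub[where h="\<lambda>x y. l x y mL" and B="C*(2*M)+K", OF X_meas Y_meas pL_dens pL_cond q_meas l_meas l_nonneg li0' gbB g0']
  have FD1: "set_integrable lborel X (\<lambda>x. mD x * g x)" using FD(1) unfolding mD_def g_def .
  have FD2: "joint_expect pD X Y (\<lambda>x y. l x y mL) = (LINT x:X|lborel. mD x * g x)" using FD(2) unfolding mD_def g_def .
  have FL1: "set_integrable lborel X (\<lambda>x. mL' x * g x)" using FL(1) unfolding mL'_def g_def .
  have FL2: "joint_expect pL X Y (\<lambda>x y. l x y mL) = (LINT x:X|lborel. mL' x * g x)" using FL(2) unfolding mL'_def g_def .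
  have "joint_expect pD X Y (\<lambda>x y. l x y mL) - joint_expect pL X Y (\<lambda>x y. l x y mL)
      = (LINT x:X|lborel. mD x * g x - mL' x * g x)"
    unfolding FD2 FL2 by (rule set_integral_diff(2)[OF FD1 FL1, symmetric])
  also have "\<dots> \<le> (LINT x:X|lborel. mD x * (C*W + K))"
  proof (rule set_integral_mono)
    show "set_integrable lborel X (\<lambda>x. mD x * g x - mL' x * g x)" by (rule set_integral_diff(1)[OF FD1 FL1])
    show "set_integrable lborel X (\<lambda>x. mD x * (C*W + K))" using mfD(1) unfolding mD_def by simp
    fix x assume x: "x \<in> X"
    show "mD x * g x - mL' x * g x \<le> mD x * (C*W + K)"
    proof (rule pw[where d="d x" and \<psi>="\<psi> x"])
      show "0 \<le> mD x" using x mfD(3) unfolding mD_def by blast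
      show "0 \<le> mL' x" using x mfL(3) unfolding mL'_def by blast
      show "\<psi> x = (if mD x \<noteq> 0 then 1 - mL' x / mD x else 0)" unfolding \<psi>_def fill_weight_def ..
    qed (use x g0 gb C0 K0 d0 Wup W0 in auto)
  qed
  also have "\<dots> = C*W + K" using mfD(2) unfolding mD_def by simp
  finally have fin: "joint_expect pD X Y (\<lambda>x y. l x y mL) - joint_expect pL X Y (\<lambda>x y. l x y mL) \<le> C*W + K" .
  have "C*W + K = (lam_lX + lam_lY * lam_p) * weighted_fill_distance (fst ` L) X (marginal pL Y) (marginal pD Y) + lam_lY * eps + eps_L"
    unfolding C_def K_def W_def LX_def mD_def mL'_def by (simp only: add.assoc)
  then show ?thesis using fin by linarith
qed

end
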